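(* Consider the network model with social-oblivious mobility and FirstMeeting (FM) routing described in the context, and let $T^{so}_{FM}$ be the time at which the message is first delivered to $D$. Then $\mathbb{E}[T^{so}_{FM}]=\frac{1}{2\lambda}(1+o(1))$ as $n\to\infty$.
   Context: Network: $n+2$ nodes, a source $S$, a destination $D$ and relays $R_1,\dots,R_n$. For each unordered pair $\{A,B\}$ of nodes the meeting instants form a Poisson process of rate $\lambda_{AB}$, independently over pairs, starting at time $0$. Social-oblivious mobility: $\lambda_{AB}=\lambda$ for all pairs, a fixed constant $\lambda>0$. FM routing: $S$ holds two copies of a message for $D$ and always keeps one. If the first node met by $S$ among $\{D,R_1,\dots,R_n\}$ is $D$, the message is delivered then; otherwise the second copy is given to that first relay $R_j$, no further copies are created or transferred, and the message is delivered when the first of $S,R_j$ meets $D$. *)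

theory Defs
  imports "HOL-Probability.Probability" "HOL-Library.Landau_Symbols"
begin

text \<open>Nodes are natural numbers: node 0 is the source S, node 1 the destination D,
  and node (j+1) is relay R_j for j = 1..n.  The meetings of the unordered pair {a,b}
  form a Poisson process of rate lam, encoded by i.i.d. Exp(lam) inter-meeting times
  w (min a b, max a b, i), i = 0,1,2,...\<close>

definition meeting_space :: "real \<Rightarrow> (nat \<times> nat \<times> nat \<Rightarrow> real) measure" where
  "meeting_space lam = PiM UNIV (\<lambda>_. density lborel (exponential_density lam))"

text \<open>Time of the k-th meeting (k = 0 is the first) of nodes a and b.\<close>
definition meet :: "nat \<Rightarrow> nat \<Rightarrow> nat \<Rightarrow> (nat \<times> nat \<times> nat \<Rightarrow> real) \<Rightarrow> real" where
  "meet a b k w = (\<Sum>i\<le>k. w (min a b, max a b, i))"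

definition first_after :: "nat \<Rightarrow> nat \<Rightarrow> real \<Rightarrow> (nat \<times> nat \<times> nat \<Rightarrow> real) \<Rightarrow> real" where
  "first_after a b t w = (INF k \<in> {k. t < meet a b k w}. meet a b k w)"

definition first_contact :: "nat \<Rightarrow> (nat \<times> nat \<times> nat \<Rightarrow> real) \<Rightarrow> nat" where
  "first_contact n w = (ARG_MIN (\<lambda>j. meet 0 j 0 w) j. j \<in> {1..n+1})"

definition T_FM :: "nat \<Rightarrow> (nat \<times> nat \<times> nat \<Rightarrow> real) \<Rightarrow> real" where
  "T_FM n w = (let j = first_contact n w; t = meet 0 j 0 w in
     if j = 1 then t else min (first_after 0 1 t w) (first_after j 1 t w))"

end

theory Submission
  imports Defs "HOL-Real_Asymp.Real_Asymp"
begin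


locale fm = fixes lam :: real assumes lam_pos: "0 < lam"
begin

abbreviation "Mc \<equiv> density lborel (exponential_density lam)"
abbreviation "P \<equiv> meeting_space lam"

lemma P_eq: "P = PiM UNIV (\<lambda>_. Mc)" by (simp add: meeting_space_def)

lemma Mc_prob: "prob_space Mc" using lam_pos by (rule prob_space_exponential_density)

sublocale P: prob_space P unfolding P_eq by (intro prob_space_PiM Mc_prob)

lemma space_P[simp]: "space P = UNIV" by (simp add: P_eq space_PiM)
lemma space_Mc[simp]: "space Mc = UNIV" by simp
lemma sets_P: "sets P = sets (PiM UNIV (\<lambda>_. borel))" unfolding P_eq by (intro sets_PiM_cong) auto

lemma meas_coord[measurable]: "(\<lambda>w. w c) \<in> borel_measurable P"
proof -
  have "measurable P borel = measurable P Mc" by (rule measurable_cong_sets) auto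
  moreover have "(\<lambda>w. w c) \<in> measurable P Mc" unfolding P_eq by (rule measurable_component_singleton) auto
  ultimately show ?thesis by blast
qed

lemma distr_coord: "distr P Mc (\<lambda>w. w c) = Mc"
  unfolding P_eq by (rule distr_PiM_component) (auto intro: Mc_prob)

lemma distributed_coord: "distributed P lborel (\<lambda>w. w c) (exponential_density lam)"
proof -
  have "distr P lborel (\<lambda>w. w c) = distr P Mc (\<lambda>w. w c)"
    by (rule distr_cong) simp_all
  then have 1: "distr P lborel (\<lambda>w. w c) = Mc"
    using distr_coord by simp
  have 2: "(\<lambda>x. ennreal (exponential_density lam x)) \<in> borel_measurable lborel" by simp
  have 3: "(\<lambda>w. w c) \<in> measurable P lborel" by simp
  show ?thesis unfolding distributed_def using 1 2 3 by blast
qed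


lemma meas_upd: "(\<lambda>(x,X). X(c:=x)) \<in> measurable (Mc \<Otimes>\<^sub>M P) P"
proof -
  have "(\<lambda>(x,X). X(c:=x)) \<in> measurable (Mc \<Otimes>\<^sub>M P) (PiM UNIV (\<lambda>_. Mc))"
  proof (rule measurable_PiM_single')
    fix i :: "nat \<times> nat \<times> nat"
    have eq: "(\<lambda>y. (case y of (x, X) \<Rightarrow> X(c := x)) i) = (\<lambda>y. if i = c then fst y else snd y i)"
      by (auto simp: fun_eq_iff)
    moreover have A: "(\<lambda>y. if i = c then fst y else snd y i) \<in> measurable (Mc \<Otimes>\<^sub>M P) Mc"
    proof (cases "i = c")
      case True then show ?thesis by simp
    next
      case False
      have "(\<lambda>w. w i) \<in> measurable P Mc" unfolding P_eq by (rule measurable_component_singleton) auto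
      then have "(\<lambda>y. snd y i) \<in> measurable (Mc \<Otimes>\<^sub>M P) Mc"
        by (rule measurable_compose[OF measurable_snd])
      then show ?thesis using False by simp
    qed
    show "(\<lambda>y. (case y of (x, X) \<Rightarrow> X(c := x)) i) \<in> measurable (Mc \<Otimes>\<^sub>M P) ((\<lambda>_. Mc) i)"
      unfolding eq by (rule A)
  qed (auto simp: space_pair_measure)
  then show ?thesis by (simp add: P_eq)
qed

lemma core:
  fixes h :: "(nat\<times>nat\<times>nat \<Rightarrow> real) \<Rightarrow> real \<Rightarrow> ennreal"
  assumes hm: "(\<lambda>(x,w). h w x) \<in> borel_measurable (Mc \<Otimes>\<^sub>M P)"
    and hc: "\<And>w x y. h (w(c:=y)) x = h w x"
  shows "(\<integral>\<^sup>+w. h w (w c) \<partial>P) = (\<integral>\<^sup>+w. (\<integral>\<^sup>+x. h w x \<partial>Mc) \<partial>P)"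
proof -
  interpret Mc: prob_space Mc by (rule Mc_prob)
  interpret pp: pair_prob_space Mc P ..
  have D: "distr (Mc \<Otimes>\<^sub>M P) P (\<lambda>(x,X). X(c:=x)) = P"
    using distr_pair_PiM_eq_PiM[of UNIV "\<lambda>_. Mc" c] Mc_prob by (simp add: P_eq)
  have mp: "(\<lambda>w. (w c, w)) \<in> measurable P (Mc \<Otimes>\<^sub>M P)"
  proof (rule measurable_Pair)
    show "(\<lambda>w. w c) \<in> measurable P Mc" unfolding P_eq by (rule measurable_component_singleton) auto
  qed simp
  have m2: "(\<lambda>w. h w (w c)) \<in> borel_measurable P"
    using measurable_compose[OF mp hm] by simp
  have "(\<integral>\<^sup>+w. h w (w c) \<partial>P) = (\<integral>\<^sup>+w. h w (w c) \<partial>distr (Mc \<Otimes>\<^sub>M P) P (\<lambda>(x,X). X(c:=x)))"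
    by (simp add: D)
  also have "\<dots> = (\<integral>\<^sup>+y. h ((\<lambda>(x,X). X(c:=x)) y) (((\<lambda>(x,X). X(c:=x)) y) c) \<partial>(Mc \<Otimes>\<^sub>M P))"
    by (rule nn_integral_distr[OF meas_upd]) (simp add: D m2)
  also have "\<dots> = (\<integral>\<^sup>+y. (\<lambda>(x,w). h w x) y \<partial>(Mc \<Otimes>\<^sub>M P))"
    by (rule nn_integral_cong) (auto simp: hc)
  also have "\<dots> = (\<integral>\<^sup>+w. (\<integral>\<^sup>+x. h w x \<partial>Mc) \<partial>P)"
    using pp.nn_integral_snd[OF hm] by simp
  finally show ?thesis .
qed


lemma indep_coords:
  assumes "I \<noteq> {}"
  shows "P.indep_vars (\<lambda>_. borel) (\<lambda>c w. w c) I"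
proof (subst P.indep_vars_iff_distr_eq_PiM[OF assms])
  show "P.random_variable borel (\<lambda>w. w i)" for i by (rule meas_coord)
  have 1: "distr P borel (\<lambda>w. w i) = Mc" for i
  proof -
    have "distr P borel (\<lambda>w. w i) = distr P Mc (\<lambda>w. w i)" by (rule distr_cong) simp_all
    then show ?thesis using distr_coord by simp
  qed
  have "distr P (PiM I (\<lambda>_. borel)) (\<lambda>x. \<lambda>i\<in>I. x i) = distr P (PiM I (\<lambda>_. Mc)) (\<lambda>x. \<lambda>i\<in>I. x i)"
  proof (rule distr_cong)
    show "sets (PiM I (\<lambda>_. borel)) = sets (PiM I (\<lambda>_. Mc))" by (rule sets_PiM_cong) auto
  qed auto
  also have "\<dots> = PiM I (\<lambda>_. Mc)"
    unfolding P_eq by (rule distr_PiM_reindex[where f="\<lambda>x. x" and K=UNIV and M="\<lambda>_. Mc" and I=I, simplified id_def[symmetric]]) (auto intro: Mc_prob)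
  finally show "distr P (PiM I (\<lambda>_. borel)) (\<lambda>x. \<lambda>i\<in>I. x i) = PiM I (\<lambda>i. distr P borel (\<lambda>w. w i))"
    unfolding 1 .
qed

lemma distributed_Min:
  assumes "finite C" "C \<noteq> {}"
  shows "distributed P lborel (\<lambda>w. Min ((\<lambda>c. w c) ` C)) (exponential_density (real (card C) * lam))"
proof -
  have "distributed P lborel (\<lambda>w. Min ((\<lambda>c. w c) ` C)) (exponential_density (\<Sum>c\<in>C. lam))"
    by (rule P.exponential_distributed_Min[OF assms lam_pos distributed_coord indep_coords[OF assms(2)]])
  then show ?thesis by simp
qed

lemma moment:
  assumes "distributed P lborel Y (exponential_density l)" "0 < l"
  shows "integrable P (\<lambda>w. Y w ^ i)" "integral\<^sup>L P (\<lambda>w. Y w ^ i) = fact i / l ^ i"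
  using P.erlang_ith_moment_integrable[OF assms(2,1)] P.erlang_ith_moment[OF assms(2,1)] by auto

end


type_synonym W = "nat \<times> nat \<times> nat \<Rightarrow> real"

definition Xm :: "nat \<Rightarrow> W \<Rightarrow> real" where
  "Xm n w = Min ((\<lambda>k. w (0,k,0)) ` {1..n+1})"

definition c0 :: real where "c0 = Inf {}"

definition good :: "nat \<Rightarrow> W \<Rightarrow> bool" where
  "good n w \<longleftrightarrow> (\<forall>c. 0 \<le> w c) \<and> (\<forall>k\<in>{2..n+1}. w (0,k,0) \<noteq> w (0,1,0))"

lemma meet0[simp]: "meet 0 j 0 w = w (0,j,0)"
  by (simp add: meet_def)

lemma fc_eq: "first_contact n w = arg_min_on (\<lambda>j. w (0,j,0)) {1..n+1}"
  by (simp add: first_contact_def arg_min_on_def)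

lemma fc_props:
  shows "first_contact n w \<in> {1..n+1}" and "w (0, first_contact n w, 0) = Xm n w"
proof -
  let ?S = "{1..n+1::nat}"
  have fin: "finite ?S" "?S \<noteq> {}" by auto
  show 1: "first_contact n w \<in> ?S" unfolding fc_eq by (rule arg_min_if_finite(1)[OF fin])
  show "w (0, first_contact n w, 0) = Xm n w" unfolding Xm_def
    by (rule Min_eqI[symmetric]) (use 1 arg_min_least[OF fin, of _ "\<lambda>j. w (0,j,0)"] in \<open>auto simp: fc_eq\<close>)
qed

lemma Xm_le: "k \<in> {1..n+1} \<Longrightarrow> Xm n w \<le> w (0,k,0)"
  unfolding Xm_def by (rule Min_le) auto

lemma Xm_nonneg: "good n w \<Longrightarrow> 0 \<le> Xm n w"
  using fc_props(2)[of w n] unfolding good_def by metis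

lemma meet_ge0:
  assumes "\<forall>i. 0 \<le> w (min a b, max a b, i)"
  shows "meet a b 0 w \<le> meet a b k w"
  unfolding meet_def using assms by (intro sum_mono2) auto

lemma fa_eq:
  assumes "\<forall>i. 0 \<le> w (min a b, max a b, i)" "t < w (min a b, max a b, 0)"
  shows "first_after a b t w = w (min a b, max a b, 0)"
proof -
  have m0: "meet a b 0 w = w (min a b, max a b, 0)" by (simp add: meet_def)
  show ?thesis unfolding first_after_def
  proof (rule cInf_eq_minimum)
    show "w (min a b, max a b, 0) \<in> (\<lambda>k. meet a b k w) ` {k. t < meet a b k w}"
      using assms(2) m0 by (intro image_eqI[of _ _ 0]) auto
    fix x assume "x \<in> (\<lambda>k. meet a b k w) ` {k. t < meet a b k w}"
    then show "w (min a b, max a b, 0) \<le> x" using meet_ge0[OF assms(1)] m0 by auto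
  qed
qed

lemma fa_ge: "min t c0 \<le> first_after a b t w"
proof (cases "{k. t < meet a b k w} = {}")
  case True then show ?thesis by (simp add: first_after_def c0_def)
next
  case False
  have "t \<le> first_after a b t w" unfolding first_after_def
    by (rule cINF_greatest[OF False]) auto
  then show ?thesis by simp
qed

lemma T_J1: "first_contact n w = 1 \<Longrightarrow> T_FM n w = w (0,1,0) \<and> Xm n w = w (0,1,0)"
  using fc_props(2)[of w n] by (simp add: T_FM_def Let_def)

lemma T_Jj:
  assumes g: "good n w" and j: "first_contact n w = j" "j \<noteq> 1"
  shows "j \<in> {2..n+1}" "Xm n w < w (0,1,0)"
    "T_FM n w = min (w (0,1,0)) (first_after j 1 (Xm n w) w)"
proof -
  show jj: "j \<in> {2..n+1}" using fc_props(1)[of n w] j by auto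
  have "Xm n w \<le> w (0,1,0)" by (rule Xm_le) auto
  moreover have "Xm n w \<noteq> w (0,1,0)" using g jj fc_props(2)[of w n] j unfolding good_def by auto
  ultimately show lt: "Xm n w < w (0,1,0)" by simp
  have "first_after 0 1 (Xm n w) w = w (0,1,0)"
    using fa_eq[of w 0 1 "Xm n w"] g lt unfolding good_def by auto
  then show "T_FM n w = min (w (0,1,0)) (first_after j 1 (Xm n w) w)"
    using j fc_props(2)[of w n] by (simp add: T_FM_def Let_def)
qed


definition Sg :: "nat \<Rightarrow> (W \<Rightarrow> real \<Rightarrow> real) \<Rightarrow> W \<Rightarrow> real" where
  "Sg n g w = (\<Sum>j\<in>{2..n+1}. if first_contact n w = j then g w (w (1,j,0)) else 0)"

lemma Sg_eq: "Sg n g w = (if first_contact n w \<in> {2..n+1} then g w (w (1, first_contact n w, 0)) else 0)"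
  unfolding Sg_def by (rule sum.delta') simp

definition g1 :: "W \<Rightarrow> real \<Rightarrow> real" where "g1 w b = max 0 (min (w (0,1,0)) b)"
definition g2 :: "real \<Rightarrow> W \<Rightarrow> real \<Rightarrow> real" where "g2 e w b = (if b \<le> e then max 0 (w (0,1,0)) else 0)"
definition g3 :: "real \<Rightarrow> W \<Rightarrow> real \<Rightarrow> real" where "g3 e w b = (if b \<le> e then 1 else 0)"

lemma U_split:
  fixes u K e x :: real
  assumes "0 < K" "0 < e" "e < x" "0 \<le> u"
  shows "u \<le> u^2 / K + K / e * x"
proof (cases "K \<le> u")
  case True
  then have "u * K \<le> u * u" using assms True mult_left_mono[of K u u] by linarith
  then have "u \<le> u^2 / K" using assms by (simp add: field_simps power2_eq_square)
  moreover have "0 \<le> K / e * x" using assms by simp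
  ultimately show ?thesis by linarith
next
  case False
  have "K \<le> K / e * x" using assms by (simp add: field_simps)
  moreover have "0 \<le> u^2 / K" using assms by simp
  ultimately show ?thesis using False by linarith
qed

lemma upper_pw:
  assumes g: "good n w" and K: "0 < K" and e: "0 < e"
  shows "T_FM n w \<le> Sg n g1 w + Xm n w + Sg n (g2 e) w + (w (0,1,0))^2 / K + K / e * Xm n w"
proof -
  have nn: "0 \<le> w c" for c using g unfolding good_def by (cases c) auto
  have X0: "0 \<le> Xm n w" using Xm_nonneg[OF g] .
  have p1: "0 \<le> (w (0,1,0))^2 / K" "0 \<le> K / e * Xm n w" using K e X0 by auto
  have sg_nn: "0 \<le> Sg n g1 w" "0 \<le> Sg n (g2 e) w" unfolding Sg_eq g1_def g2_def using nn by auto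
  show ?thesis
  proof (cases "first_contact n w = 1")
    case True
    then show ?thesis using T_J1[OF True] p1 sg_nn by linarith
  next
    case False
    define j where "j = first_contact n w"
    note jj = T_Jj[OF g j_def[symmetric] False[folded j_def]]
    have S1: "Sg n g1 w = min (w (0,1,0)) (w (1,j,0))" "Sg n (g2 e) w = g2 e w (w (1,j,0))"
      unfolding Sg_eq j_def[symmetric] g1_def using jj(1) nn[of "(0,1,0)"] nn[of "(1,j,0)"] by auto
    have mm: "min j 1 = 1" "max j 1 = j" using jj(1) by auto
    show ?thesis
    proof (cases "Xm n w < w (1,j,0)")
      case True
      have "first_after j 1 (Xm n w) w = w (1,j,0)" using fa_eq[of w j 1 "Xm n w"] nn True mm by auto
      then show ?thesis using jj(3) S1 X0 p1 sg_nn by linarith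
    next
      case False
      have TU: "T_FM n w \<le> w (0,1,0)" using jj(3) by simp
      show ?thesis
      proof (cases "w (1,j,0) \<le> e")
        case True
        then have "Sg n (g2 e) w = w (0,1,0)" using S1 nn[of "(0,1,0)"] by (simp add: g2_def)
        then show ?thesis using TU X0 p1 sg_nn by linarith
      next
        case False2: False
        have "w (0,1,0) \<le> (w (0,1,0))^2 / K + K / e * Xm n w"
          by (rule U_split) (use K e False False2 nn in auto)
        then show ?thesis using TU X0 sg_nn by linarith
      qed
    qed
  qed
qed

lemma lower_pw:
  assumes g: "good n w" and K: "0 < K" and e: "0 < e"
  shows "Sg n g1 w - Sg n (g2 e) w - (w (0,1,0))^2 / K - K / e * Xm n w - \<bar>c0\<bar> * (Sg n (g3 e) w + Xm n w / e) \<le> T_FM n w"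
proof -
  have nn: "0 \<le> w c" for c using g unfolding good_def by (cases c) auto
  have X0: "0 \<le> Xm n w" using Xm_nonneg[OF g] .
  have p1: "0 \<le> (w (0,1,0))^2 / K" "0 \<le> K / e * Xm n w" "0 \<le> \<bar>c0\<bar> * (Sg n (g3 e) w + Xm n w / e)"
    using K e X0 by (auto simp: Sg_eq g3_def)
  have sg_nn: "0 \<le> Sg n (g2 e) w" unfolding Sg_eq g2_def using nn by auto
  show ?thesis
  proof (cases "first_contact n w = 1")
    case True
    then have "Sg n g1 w = 0" by (simp add: Sg_eq)
    then show ?thesis using T_J1[OF True] p1 sg_nn nn[of "(0,1,0)"] by linarith
  next
    case False
    define j where "j = first_contact n w"
    note jj = T_Jj[OF g j_def[symmetric] False[folded j_def]]
    have S1: "Sg n g1 w = min (w (0,1,0)) (w (1,j,0))" "Sg n (g2 e) w = g2 e w (w (1,j,0))"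
      "Sg n (g3 e) w = g3 e w (w (1,j,0))"
      unfolding Sg_eq j_def[symmetric] g1_def using jj(1) nn[of "(0,1,0)"] nn[of "(1,j,0)"] by auto
    have mm: "min j 1 = 1" "max j 1 = j" using jj(1) by auto
    show ?thesis
    proof (cases "Xm n w < w (1,j,0)")
      case True
      have "first_after j 1 (Xm n w) w = w (1,j,0)" using fa_eq[of w j 1 "Xm n w"] nn True mm by auto
      then show ?thesis using jj(3) S1 X0 p1 sg_nn by linarith
    next
      case False
      have "min (Xm n w) c0 \<le> first_after j 1 (Xm n w) w" by (rule fa_ge)
      then have Tl: "- \<bar>c0\<bar> \<le> T_FM n w" using jj(3) X0 nn[of "(0,1,0)"] by linarith
      have S1U: "Sg n g1 w \<le> w (0,1,0)" using S1 by simp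
      show ?thesis
      proof (cases "w (1,j,0) \<le> e")
        case True
        then have "Sg n (g2 e) w = w (0,1,0)" "Sg n (g3 e) w = 1" using S1 nn[of "(0,1,0)"] by (auto simp: g2_def g3_def)
        moreover have "0 \<le> \<bar>c0\<bar> * (Xm n w / e)" using X0 e by simp
        ultimately show ?thesis using Tl S1U p1 by (simp add: algebra_simps) 
      next
        case False2: False
        have "w (0,1,0) \<le> (w (0,1,0))^2 / K + K / e * Xm n w"
          by (rule U_split) (use K e False False2 nn in auto)
        moreover have "1 \<le> Xm n w / e" using False False2 e by simp
        then have "\<bar>c0\<bar> \<le> \<bar>c0\<bar> * (Xm n w / e)" using mult_left_mono[of 1 "Xm n w / e" "\<bar>c0\<bar>"] by simp
        moreover have "0 \<le> \<bar>c0\<bar> * Sg n (g3 e) w" by (simp add: Sg_eq g3_def)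
        ultimately show ?thesis using Tl S1U sg_nn by (simp add: algebra_simps) 
      qed
    qed
  qed
qed


context fm begin

lemma Xm_meas[measurable]: "Xm n \<in> borel_measurable P"
  unfolding Xm_def[abs_def] by measurable

lemma eqX_pred[measurable]: "Measurable.pred P (\<lambda>w. w (0,y,0) = Xm n w)"
  unfolding pred_def by (rule measurable_equality_set) simp_all

lemma J_pred[measurable]: "Measurable.pred P (\<lambda>w. first_contact n w = j)"
proof -
  let ?S = "{1..n+1::nat}"
  have eqS: "first_contact n w = (SOME y. y \<in> {y\<in>?S. w (0,y,0) = Xm n w})" for w
    unfolding fc_eq arg_min_SOME_Min[OF finite_atLeastAtMost] Xm_def
    by (simp add: image_image)
  have "{w\<in>space P. first_contact n w = j} =
      (\<Union>A\<in>{A. A \<subseteq> ?S \<and> (SOME y. y \<in> A) = j}. {w\<in>space P. \<forall>y\<in>?S. (y \<in> A \<longleftrightarrow> w (0,y,0) = Xm n w)})"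
  proof (intro set_eqI iffI)
    fix w assume "w \<in> {w\<in>space P. first_contact n w = j}"
    then show "w \<in> (\<Union>A\<in>{A. A \<subseteq> ?S \<and> (SOME y. y \<in> A) = j}. {w\<in>space P. \<forall>y\<in>?S. (y \<in> A \<longleftrightarrow> w (0,y,0) = Xm n w)})"
      by (intro UN_I[of "{y\<in>?S. w (0,y,0) = Xm n w}"]) (auto simp: eqS)
  next
    fix w assume "w \<in> (\<Union>A\<in>{A. A \<subseteq> ?S \<and> (SOME y. y \<in> A) = j}. {w\<in>space P. \<forall>y\<in>?S. (y \<in> A \<longleftrightarrow> w (0,y,0) = Xm n w)})"
    then obtain A where A: "A \<subseteq> ?S" "(SOME y. y \<in> A) = j" "\<forall>y\<in>?S. (y \<in> A \<longleftrightarrow> w (0,y,0) = Xm n w)" by auto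
    then have e: "{y\<in>?S. w (0,y,0) = Xm n w} = A" by auto
    have "first_contact n w = (SOME y. y \<in> A)" unfolding eqS e ..
    then show "w \<in> {w\<in>space P. first_contact n w = j}" using A(2) by simp
  qed
  also have "\<dots> \<in> sets P"
  proof (rule sets.finite_UN)
    show "finite {A. A \<subseteq> ?S \<and> (SOME y. y \<in> A) = j}" by (rule finite_subset[of _ "Pow ?S"]) auto
    fix A show "{w\<in>space P. \<forall>y\<in>?S. (y \<in> A \<longleftrightarrow> w (0,y,0) = Xm n w)} \<in> sets P"
      by measurable
  qed
  finally show ?thesis unfolding pred_def .
qed

lemma J_meas: "(\<lambda>w. first_contact n w) \<in> measurable P (count_space UNIV)"
  unfolding measurable_count_space_eq2_countable
proof safe
  fix a :: nat
  have "(\<lambda>w. first_contact n w) -` {a} \<inter> space P = {w\<in>space P. first_contact n w = a}" by auto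
  also have "\<dots> \<in> sets P" using J_pred[of n a] unfolding pred_def .
  finally show "(\<lambda>w. first_contact n w) -` {a} \<inter> space P \<in> sets P" .
qed auto

lemma fa_meas[measurable]:
  assumes [measurable]: "t \<in> borel_measurable P"
  shows "(\<lambda>w. first_after a b (t w) w) \<in> borel_measurable P"
proof (rule borel_measurableI_less)
  fix y :: real
  let ?m = "\<lambda>k w. meet a b k w"
  have mm[measurable]: "meet a b k \<in> borel_measurable P" for k
    unfolding meet_def[abs_def] by measurable
  have "{w\<in>space P. first_after a b (t w) w < y} =
     {w\<in>space P. (\<forall>k. ?m k w \<le> t w) \<and> Inf ({}::real set) < y} \<union>
     (\<Union>k. {w\<in>space P. t w < ?m k w \<and> ?m k w < y})"
  proof (intro set_eqI iffI)
    fix w assume w: "w \<in> {w\<in>space P. first_after a b (t w) w < y}"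
    show "w \<in> {w\<in>space P. (\<forall>k. ?m k w \<le> t w) \<and> Inf ({}::real set) < y} \<union>
     (\<Union>k. {w\<in>space P. t w < ?m k w \<and> ?m k w < y})"
    proof (cases "{k. t w < ?m k w} = {}")
      case True
      have "first_after a b (t w) w = Inf {}" unfolding first_after_def True by simp
      then show ?thesis using w True by (auto simp: not_less)
    next
      case False
      have "bdd_below ((\<lambda>k. ?m k w) ` {k. t w < ?m k w})"
        by (rule bdd_belowI[of _ "t w"]) auto
      then have "\<exists>x\<in>(\<lambda>k. ?m k w) ` {k. t w < ?m k w}. x < y"
        using w False cInf_less_iff[of "(\<lambda>k. ?m k w) ` {k. t w < ?m k w}" y]
        by (auto simp: first_after_def)
      then show ?thesis by auto
    qed
  next
    fix w assume w: "w \<in> {w\<in>space P. (\<forall>k. ?m k w \<le> t w) \<and> Inf ({}::real set) < y} \<union>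
     (\<Union>k. {w\<in>space P. t w < ?m k w \<and> ?m k w < y})"
    show "w \<in> {w\<in>space P. first_after a b (t w) w < y}"
    proof (cases "{k. t w < ?m k w} = {}")
      case True
      have "first_after a b (t w) w = Inf {}" unfolding first_after_def True by simp
      then show ?thesis using w True by (auto simp: not_less) (meson leD)
    next
      case False
      have "bdd_below ((\<lambda>k. ?m k w) ` {k. t w < ?m k w})"
        by (rule bdd_belowI[of _ "t w"]) auto
      then show ?thesis
        using w False cInf_less_iff[of "(\<lambda>k. ?m k w) ` {k. t w < ?m k w}" y]
        by (auto simp: first_after_def) (meson leD)
    qed
  qed
  also have "\<dots> \<in> sets P"
  proof (rule sets.Un)
    have "{w\<in>space P. (\<forall>k. ?m k w \<le> t w) \<and> Inf ({}::real set) < y} =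
      (if Inf ({}::real set) < y then (\<Inter>k. {w\<in>space P. ?m k w \<le> t w}) else {})" by auto
    also have "\<dots> \<in> sets P"
    proof -
      have le: "{w\<in>space P. ?m k w \<le> t w} \<in> sets P" for k by (rule borel_measurable_le[OF mm assms])
      have "(\<Inter>k. {w\<in>space P. ?m k w \<le> t w}) \<in> sets P"
        by (rule sets.countable_INT') (use le in auto)
      then show ?thesis by simp
    qed
    finally show "{w\<in>space P. (\<forall>k. ?m k w \<le> t w) \<and> Inf ({}::real set) < y} \<in> sets P" .
    have u: "{w\<in>space P. t w < ?m k w \<and> ?m k w < y} \<in> sets P" for k
    proof -
      have "{w\<in>space P. t w < ?m k w \<and> ?m k w < y} = {w\<in>space P. t w < ?m k w} \<inter> {w\<in>space P. ?m k w < y}" by auto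
      also have "\<dots> \<in> sets P"
        by (intro sets.Int borel_measurable_less mm assms borel_measurable_const)
      finally show ?thesis .
    qed
    show "(\<Union>k. {w\<in>space P. t w < ?m k w \<and> ?m k w < y}) \<in> sets P"
      by (rule sets.countable_UN') (use u in auto)
  qed
  finally show "{w\<in>space P. first_after a b (t w) w < y} \<in> sets P" .
qed

lemma T_meas[measurable]: "T_FM n \<in> borel_measurable P"
proof -
  define F where "F j w = (if j = 1 then meet 0 j 0 w else
     min (first_after 0 1 (meet 0 j 0 w) w) (first_after j 1 (meet 0 j 0 w) w))" for j w
  have "T_FM n = (\<lambda>w. F (first_contact n w) w)"
    by (simp add: fun_eq_iff T_FM_def F_def Let_def)
  also have "\<dots> \<in> borel_measurable P"
  proof (rule measurable_compose_countable'[OF _ J_meas])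
    fix j :: nat
    have [measurable]: "(\<lambda>w. meet 0 j 0 w) \<in> borel_measurable P" by simp
    show "(\<lambda>w. F j w) \<in> borel_measurable P" unfolding F_def by measurable
  qed auto
  finally show ?thesis .
qed

end


context fm begin

lemma AE_nonneg: "AE w in P. \<forall>c. 0 \<le> w c"
proof (subst AE_all_countable, intro allI)
  fix c :: "nat \<times> nat \<times> nat"
  have A: "AE x in Mc. 0 \<le> x"
    by (subst AE_density) (auto simp: exponential_density_def intro!: AE_I2)
  show "AE w in P. 0 \<le> w c"
    unfolding P_eq by (rule AE_PiM_component[of UNIV "\<lambda>_. Mc" c "\<lambda>x. 0 \<le> x", OF Mc_prob _ A]) auto
qed

lemma Mc_single: "emeasure Mc {a} = 0"
proof -
  have "AE x in lborel. x \<in> {a} \<longrightarrow> ennreal (exponential_density lam x) = 0"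
    using AE_lborel_singleton[of a] by eventually_elim auto
  then have "{a} \<in> null_sets Mc" by (subst null_sets_density_iff) auto
  then show ?thesis by auto
qed

lemma AE_neq:
  assumes "c1 \<noteq> c2"
  shows "AE w in P. w c1 \<noteq> w c2"
proof -
  define h where "h w x = (indicator {w c2} x :: ennreal)" for w :: W and x :: real
  have hm: "(\<lambda>(x,w). h w x) \<in> borel_measurable (Mc \<Otimes>\<^sub>M P)"
  proof -
    have "(\<lambda>(x,w). h w x) = (\<lambda>y. indicator {y\<in>space (Mc \<Otimes>\<^sub>M P). fst y = snd y c2} y :: ennreal)"
      by (auto simp: h_def fun_eq_iff space_pair_measure split: split_indicator)
    also have "\<dots> \<in> borel_measurable (Mc \<Otimes>\<^sub>M P)"
    proof (intro borel_measurable_indicator measurable_equality_set)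
      have "measurable (Mc \<Otimes>\<^sub>M P) borel = measurable (Mc \<Otimes>\<^sub>M P) Mc" by (rule measurable_cong_sets) auto
      then show "fst \<in> borel_measurable (Mc \<Otimes>\<^sub>M P)"
        using measurable_fst[of Mc P] by blast
      show "(\<lambda>y. snd y c2) \<in> borel_measurable (Mc \<Otimes>\<^sub>M P)"
        by (rule measurable_compose[OF measurable_snd meas_coord])
    qed
    finally show ?thesis .
  qed
  have hc: "h (w(c1:=y)) x = h w x" for w x y using assms by (simp add: h_def)
  have "(\<integral>\<^sup>+w. h w (w c1) \<partial>P) = (\<integral>\<^sup>+w. (\<integral>\<^sup>+x. h w x \<partial>Mc) \<partial>P)"
    by (rule core[OF hm hc])
  also have "\<dots> = 0"
    by (simp add: h_def Mc_single)
  finally have z: "(\<integral>\<^sup>+w. h w (w c1) \<partial>P) = 0" .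
  have S: "{w\<in>space P. w c1 = w c2} \<in> sets P" by (rule measurable_equality_set) auto
  have "(\<integral>\<^sup>+w. h w (w c1) \<partial>P) = emeasure P {w\<in>space P. w c1 = w c2}"
    by (subst nn_integral_indicator[OF S, symmetric]) (auto intro!: nn_integral_cong simp: h_def split: split_indicator)
  then have "emeasure P {w\<in>space P. w c1 = w c2} = 0" using z by simp
  then show ?thesis by (subst AE_iff_measurable[OF S]) auto
qed

lemma AE_good: "AE w in P. good n w"
proof -
  have "AE w in P. \<forall>k. k \<in> {2..n+1} \<longrightarrow> w (0,k,0) \<noteq> w (0,1,0)"
  proof (subst AE_all_countable, intro allI)
    fix k :: nat
    show "AE w in P. k \<in> {2..n+1} \<longrightarrow> w (0,k,0) \<noteq> w (0,1,0)"
    proof (cases "k \<in> {2..n+1}")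
      case True
      then have "(0,k,0) \<noteq> (0::nat,1::nat,0::nat)" by auto
      from AE_neq[OF this] show ?thesis by auto
    qed auto
  qed
  with AE_nonneg show ?thesis unfolding good_def by eventually_elim auto
qed

end


lemma fc_upd: "fst c = 1 \<Longrightarrow> first_contact n (w(c:=y)) = first_contact n w"
  unfolding fc_eq by (rule arg_cong[where f="\<lambda>f. arg_min_on f _"]) (auto simp: fun_eq_iff)

context fm begin

lemma comp_meas:
  assumes "(\<lambda>(x,w). h w x) \<in> measurable (Mc \<Otimes>\<^sub>M P) N"
  shows "(\<lambda>w. h w (w c)) \<in> measurable P N"
proof -
  have mp: "(\<lambda>w. (w c, w)) \<in> measurable P (Mc \<Otimes>\<^sub>M P)"
  proof (rule measurable_Pair)
    show "(\<lambda>w. w c) \<in> measurable P Mc" unfolding P_eq by (rule measurable_component_singleton) auto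
  qed simp
  show ?thesis using measurable_compose[OF mp assms] by simp
qed

lemma swap_sum:
  fixes g :: "W \<Rightarrow> real \<Rightarrow> real"
  assumes g0: "\<And>w x. 0 \<le> g w x"
    and gm: "(\<lambda>(x,w). g w x) \<in> borel_measurable (Mc \<Otimes>\<^sub>M P)"
    and gc: "\<And>w x c y. fst c = 1 \<Longrightarrow> g (w(c:=y)) x = g w x"
  shows "integral\<^sup>L P (Sg n g) = integral\<^sup>L P (\<lambda>w. if first_contact n w \<in> {2..n+1} then g w (w (1,0,0)) else 0)"
proof -
  define h where "h j w x = ennreal (if first_contact n w = j then g w x else 0)" for j w x
  have hm: "(\<lambda>(x,w). h j w x) \<in> borel_measurable (Mc \<Otimes>\<^sub>M P)" for j
  proof -
    have p: "Measurable.pred (Mc \<Otimes>\<^sub>M P) (\<lambda>y. first_contact n (snd y) = j)"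
      by (rule measurable_compose[OF measurable_snd J_pred])
    have "(\<lambda>y. if first_contact n (snd y) = j then (\<lambda>(x,w). g w x) y else 0) \<in> borel_measurable (Mc \<Otimes>\<^sub>M P)"
      by (rule measurable_If[OF gm borel_measurable_const p[unfolded pred_def]])
    then have "(\<lambda>y. ennreal (if first_contact n (snd y) = j then (\<lambda>(x,w). g w x) y else 0)) \<in> borel_measurable (Mc \<Otimes>\<^sub>M P)"
      by (rule measurable_compose[OF _ measurable_ennreal])
    moreover have "(\<lambda>(x,w). h j w x) = (\<lambda>y. ennreal (if first_contact n (snd y) = j then (\<lambda>(x,w). g w x) y else 0))"
      by (auto simp: fun_eq_iff h_def)
    ultimately show ?thesis by simp
  qed
  have hc: "h j (w(c:=y)) x = h j w x" if "fst c = 1" for j w x c y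
    using that by (simp add: h_def fc_upd gc)
  have sw: "(\<integral>\<^sup>+w. h j w (w (1,j,0)) \<partial>P) = (\<integral>\<^sup>+w. h j w (w (1,0,0)) \<partial>P)" for j
  proof -
    have "(\<integral>\<^sup>+w. h j w (w (1,j,0)) \<partial>P) = (\<integral>\<^sup>+w. (\<integral>\<^sup>+x. h j w x \<partial>Mc) \<partial>P)"
      by (rule core[OF hm]) (rule hc, simp)
    also have "\<dots> = (\<integral>\<^sup>+w. h j w (w (1,0,0)) \<partial>P)"
      by (rule core[OF hm, symmetric]) (rule hc, simp)
    finally show ?thesis .
  qed
  have m1: "(\<lambda>w. h j w (w c)) \<in> borel_measurable P" for j c by (rule comp_meas[OF hm])
  have gmc: "(\<lambda>w. g w (w c)) \<in> borel_measurable P" for c by (rule comp_meas[OF gm])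
  have SgM: "Sg n g \<in> borel_measurable P"
    unfolding Sg_def[abs_def] by (intro borel_measurable_sum measurable_If gmc borel_measurable_const J_pred[unfolded pred_def])
  have RM: "(\<lambda>w. if first_contact n w \<in> {2..n+1} then g w (w (1,0,0)) else 0) \<in> borel_measurable P"
  proof -
    have "(\<lambda>w. if first_contact n w \<in> {2..n+1} then g w (w (1,0,0)) else 0) =
      (\<lambda>w. \<Sum>j\<in>{2..n+1}. if first_contact n w = j then g w (w (1,0,0)) else 0)"
      by (simp add: fun_eq_iff sum.delta')
    also have "\<dots> \<in> borel_measurable P"
      by (intro borel_measurable_sum measurable_If gmc borel_measurable_const J_pred[unfolded pred_def])
    finally show ?thesis .
  qed
  have "integral\<^sup>L P (Sg n g) = enn2real (\<integral>\<^sup>+w. ennreal (Sg n g w) \<partial>P)"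
    by (rule integral_eq_nn_integral[OF SgM]) (simp add: Sg_def sum_nonneg g0)
  also have "(\<integral>\<^sup>+w. ennreal (Sg n g w) \<partial>P) = (\<integral>\<^sup>+w. (\<Sum>j\<in>{2..n+1}. h j w (w (1,j,0))) \<partial>P)"
    by (rule nn_integral_cong) (simp add: Sg_def h_def g0)
  also have "\<dots> = (\<Sum>j\<in>{2..n+1}. (\<integral>\<^sup>+w. h j w (w (1,j,0)) \<partial>P))"
    by (rule nn_integral_sum) (rule m1)
  also have "\<dots> = (\<Sum>j\<in>{2..n+1}. (\<integral>\<^sup>+w. h j w (w (1,0,0)) \<partial>P))"
    by (intro sum.cong refl sw)
  also have "\<dots> = (\<integral>\<^sup>+w. (\<Sum>j\<in>{2..n+1}. h j w (w (1,0,0))) \<partial>P)"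
    by (rule nn_integral_sum[symmetric]) (rule m1)
  also have "\<dots> = (\<integral>\<^sup>+w. ennreal (if first_contact n w \<in> {2..n+1} then g w (w (1,0,0)) else 0) \<partial>P)"
    by (rule nn_integral_cong) (simp add: h_def g0 sum.delta')
  also have "enn2real \<dots> = integral\<^sup>L P (\<lambda>w. if first_contact n w \<in> {2..n+1} then g w (w (1,0,0)) else 0)"
    by (rule integral_eq_nn_integral[OF RM, symmetric]) (simp add: g0)
  finally show ?thesis .
qed

end


lemma U_le: fixes u K :: real assumes "0 < K" "0 \<le> u" shows "u \<le> u^2 / K + K"
proof (cases "u \<le> K")
  case True then show ?thesis using assms by (simp add: add_increasing)
next
  case False
  then have "u * K \<le> u * u" using assms mult_left_mono[of K u u] by linarith
  then have "u \<le> u^2 / K" using assms by (simp add: field_simps power2_eq_square)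
  then show ?thesis using assms by linarith
qed

lemma T_bounds:
  assumes g: "good n w"
  shows "- \<bar>c0\<bar> \<le> T_FM n w" "T_FM n w \<le> w (0,1,0)"
proof -
  have nn: "0 \<le> w c" for c using g unfolding good_def by (cases c) auto
  have X0: "0 \<le> Xm n w" using Xm_nonneg[OF g] .
  have "- \<bar>c0\<bar> \<le> T_FM n w \<and> T_FM n w \<le> w (0,1,0)"
  proof (cases "first_contact n w = 1")
    case True then show ?thesis using T_J1[OF True] nn[of "(0,1,0)"] by auto
  next
    case False
    define j where "j = first_contact n w"
    note jj = T_Jj[OF g j_def[symmetric] False[folded j_def]]
    have "min (Xm n w) c0 \<le> first_after j 1 (Xm n w) w" by (rule fa_ge)
    then show ?thesis using jj(3) X0 nn[of "(0,1,0)"] by auto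
  qed
  then show "- \<bar>c0\<bar> \<le> T_FM n w" "T_FM n w \<le> w (0,1,0)" by auto
qed

context fm begin

lemma fst_meas[measurable]: "fst \<in> borel_measurable (Mc \<Otimes>\<^sub>M P)"
proof -
  have "measurable (Mc \<Otimes>\<^sub>M P) borel = measurable (Mc \<Otimes>\<^sub>M P) Mc" by (rule measurable_cong_sets) auto
  then show ?thesis using measurable_fst[of Mc P] by blast
qed

lemma snd_meas[measurable]: "(\<lambda>y. snd y c) \<in> borel_measurable (Mc \<Otimes>\<^sub>M P)"
  by (rule measurable_compose[OF measurable_snd meas_coord])

lemma g1_meas: "(\<lambda>(x,w). g1 w x) \<in> borel_measurable (Mc \<Otimes>\<^sub>M P)"
proof -
  have "(\<lambda>(x,w). g1 w x) = (\<lambda>y. max 0 (min (snd y (0,1,0)) (fst y)))" by (auto simp: g1_def fun_eq_iff)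
  also have "\<dots> \<in> borel_measurable (Mc \<Otimes>\<^sub>M P)" by measurable
  finally show ?thesis .
qed

lemma g2_meas: "(\<lambda>(x,w). g2 e w x) \<in> borel_measurable (Mc \<Otimes>\<^sub>M P)"
proof -
  have "(\<lambda>(x,w). g2 e w x) = (\<lambda>y. if fst y \<le> e then max 0 (snd y (0,1,0)) else 0)" by (auto simp: g2_def fun_eq_iff)
  also have "\<dots> \<in> borel_measurable (Mc \<Otimes>\<^sub>M P)" by measurable
  finally show ?thesis .
qed

lemma g3_meas: "(\<lambda>(x,w). g3 e w x) \<in> borel_measurable (Mc \<Otimes>\<^sub>M P)"
proof -
  have "(\<lambda>(x,w). g3 e w x) = (\<lambda>y. if fst y \<le> e then 1 else (0::real))" by (auto simp: g3_def fun_eq_iff)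
  also have "\<dots> \<in> borel_measurable (Mc \<Otimes>\<^sub>M P)" by measurable
  finally show ?thesis .
qed

lemma Sg_meas:
  assumes gm: "(\<lambda>(x,w). g w x) \<in> borel_measurable (Mc \<Otimes>\<^sub>M P)"
  shows "Sg n g \<in> borel_measurable P"
proof -
  have gmc: "(\<lambda>w. g w (w c)) \<in> borel_measurable P" for c by (rule comp_meas[OF gm])
  show ?thesis
    unfolding Sg_def[abs_def] by (intro borel_measurable_sum measurable_If gmc borel_measurable_const J_pred[unfolded pred_def])
qed

lemma Xm_distr: "distributed P lborel (Xm n) (exponential_density (real (n+1) * lam))"
proof -
  let ?C = "(\<lambda>k. (0::nat,k,0::nat)) ` {1..n+1}"
  have "Xm n = (\<lambda>w. Min ((\<lambda>c. w c) ` ?C))" by (simp add: fun_eq_iff Xm_def image_image)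
  moreover have "card ?C = n + 1" by (subst card_image) (auto simp: inj_on_def)
  moreover have "distributed P lborel (\<lambda>w. Min ((\<lambda>c. w c) ` ?C)) (exponential_density (real (card ?C) * lam))"
    by (rule distributed_Min) auto
  ultimately show ?thesis by simp
qed

lemma E_Xm: "integrable P (Xm n)" "integral\<^sup>L P (Xm n) = 1 / (real (n+1) * lam)"
  using moment[OF Xm_distr[of n], where i=1] lam_pos by auto

lemma E_U2: "integrable P (\<lambda>w. (w (0,1,0))^2)" "integral\<^sup>L P (\<lambda>w. (w (0,1,0))^2) = 2 / lam^2"
  using moment[OF distributed_coord lam_pos, of _ 2] by auto

lemma E_min: "integrable P (\<lambda>w. min (w (0,1,0)) (w (1,0,0)))"
   "integral\<^sup>L P (\<lambda>w. min (w (0,1,0)) (w (1,0,0))) = 1 / (2 * lam)"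
proof -
  let ?C = "{(0::nat,1::nat,0::nat), (1,0,0)}"
  have e: "(\<lambda>w. min (w (0,1,0)) (w (1,0,0))) = (\<lambda>w. Min ((\<lambda>c. w c) ` ?C))" by (simp add: fun_eq_iff)
  have "distributed P lborel (\<lambda>w. Min ((\<lambda>c. w c) ` ?C)) (exponential_density (real (card ?C) * lam))"
    by (rule distributed_Min) auto
  then have d: "distributed P lborel (\<lambda>w. min (w (0,1,0)) (w (1,0,0))) (exponential_density (2 * lam))"
    unfolding e by simp
  show "integrable P (\<lambda>w. min (w (0,1,0)) (w (1,0,0)))"
    "integral\<^sup>L P (\<lambda>w. min (w (0,1,0)) (w (1,0,0))) = 1 / (2 * lam)"
    using moment[OF d, of 1] lam_pos by auto
qed

lemma E_V:
  assumes "0 \<le> e"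
  shows "integrable P (\<lambda>w. if w (1,0,0) \<le> e then 1 else 0::real)"
    "integral\<^sup>L P (\<lambda>w. if w (1,0,0) \<le> e then 1 else 0::real) = 1 - exp (- e * lam)"
proof -
  have S: "{w\<in>space P. w (1,0,0) \<le> e} \<in> sets P" by measurable
  have i: "(\<lambda>w. if w (1,0,0) \<le> e then 1 else 0::real) = indicator {w\<in>space P. w (1,0,0) \<le> e}"
    by (auto simp: fun_eq_iff)
  show "integrable P (\<lambda>w. if w (1,0,0) \<le> e then 1 else 0::real)"
    unfolding i by (rule integrable_real_indicator[OF S]) (simp add: P.emeasure_eq_measure)
  have "\<P>(w in P. w (1,0,0) \<le> e) = 1 - exp (- e * lam)"
    by (rule P.exponential_distributedD_le[OF distributed_coord assms lam_pos])
  then show "integral\<^sup>L P (\<lambda>w. if w (1,0,0) \<le> e then 1 else 0::real) = 1 - exp (- e * lam)"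
    unfolding i by simp
qed

end


context fm begin

lemma E_U: "integrable P (\<lambda>w. w (0,1,0))"
  using moment[OF distributed_coord lam_pos, where i=1] by auto

lemma g_indep:
  "fst c = 1 \<Longrightarrow> g1 (w(c:=y)) x = g1 w x"
  "fst c = 1 \<Longrightarrow> g2 e (w(c:=y)) x = g2 e w x"
  "fst c = 1 \<Longrightarrow> g3 e (w(c:=y)) x = g3 e w x"
  by (cases c; auto simp: g1_def g2_def g3_def)+

lemma g_nonneg: "0 \<le> g1 w x" "0 \<le> g2 e w x" "0 \<le> g3 e w x"
  by (auto simp: g1_def g2_def g3_def)

lemma nn_good: "good n w \<Longrightarrow> 0 \<le> w c"
  unfolding good_def by (cases c) auto

lemma int_Sg:
  shows "integrable P (Sg n g1)" "integrable P (Sg n (g2 e))" "integrable P (Sg n (g3 e))"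
proof -
  show "integrable P (Sg n g1)"
  proof (rule Bochner_Integration.integrable_bound[OF E_U Sg_meas[OF g1_meas]])
    show "AE w in P. norm (Sg n g1 w) \<le> norm (w (0,1,0))"
      using AE_good[of n] by eventually_elim (auto simp: Sg_eq g1_def nn_good)
  qed
  show "integrable P (Sg n (g2 e))"
  proof (rule Bochner_Integration.integrable_bound[OF E_U Sg_meas[OF g2_meas]])
    show "AE w in P. norm (Sg n (g2 e) w) \<le> norm (w (0,1,0))"
      using AE_good[of n] by eventually_elim (auto simp: Sg_eq g2_def nn_good)
  qed
  show "integrable P (Sg n (g3 e))"
  proof (rule Bochner_Integration.integrable_bound[OF P.integrable_const[of 1] Sg_meas[OF g3_meas]])
    show "AE w in P. norm (Sg n (g3 e) w) \<le> norm (1::real)"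
      by (auto simp: Sg_eq g3_def)
  qed
qed

lemma R_meas:
  fixes g :: "W \<Rightarrow> real \<Rightarrow> real"
  assumes gm: "(\<lambda>(x,w). g w x) \<in> borel_measurable (Mc \<Otimes>\<^sub>M P)"
  shows "(\<lambda>w. if first_contact n w \<in> {2..n+1} then g w (w (1,0,0)) else 0) \<in> borel_measurable P"
proof -
  have gmc: "(\<lambda>w. g w (w c)) \<in> borel_measurable P" for c by (rule comp_meas[OF gm])
  have "(\<lambda>w. if first_contact n w \<in> {2..n+1} then g w (w (1,0,0)) else 0) =
      (\<lambda>w. \<Sum>j\<in>{2..n+1}. if first_contact n w = j then g w (w (1,0,0)) else 0)"
    by (simp add: fun_eq_iff sum.delta')
  also have "\<dots> \<in> borel_measurable P"
    by (intro borel_measurable_sum measurable_If gmc borel_measurable_const J_pred[unfolded pred_def])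
  finally show ?thesis .
qed

lemma I1:
  "integral\<^sup>L P (Sg n g1) \<le> 1 / (2 * lam)"
  "1 / (2 * lam) - 1 / (real (n+1) * lam) \<le> integral\<^sup>L P (Sg n g1)"
proof -
  let ?R = "\<lambda>w. if first_contact n w \<in> {2..n+1} then g1 w (w (1,0,0)) else 0"
  have eq: "integral\<^sup>L P (Sg n g1) = integral\<^sup>L P ?R"
    by (rule swap_sum[OF _ g1_meas]) (auto intro: g_nonneg g_indep)
  have iR: "integrable P ?R"
  proof (rule Bochner_Integration.integrable_bound[OF E_U R_meas[OF g1_meas]])
    show "AE w in P. norm (?R w) \<le> norm (w (0,1,0))"
      using AE_good[of n] by eventually_elim (auto simp: g1_def nn_good)
  qed
  have "integral\<^sup>L P ?R \<le> integral\<^sup>L P (\<lambda>w. min (w (0,1,0)) (w (1,0,0)))"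
    by (rule integral_mono_AE[OF iR E_min(1)])
       (use AE_good[of n] in \<open>eventually_elim, auto simp: g1_def nn_good\<close>)
  then show "integral\<^sup>L P (Sg n g1) \<le> 1 / (2 * lam)" using eq E_min(2) by simp
  have "integral\<^sup>L P (\<lambda>w. min (w (0,1,0)) (w (1,0,0)) - Xm n w) \<le> integral\<^sup>L P ?R"
  proof (rule integral_mono_AE[OF Bochner_Integration.integrable_diff[OF E_min(1) E_Xm(1)] iR])
    show "AE w in P. min (w (0,1,0)) (w (1,0,0)) - Xm n w \<le> ?R w"
      using AE_good[of n]
    proof eventually_elim
      case (elim w)
      show ?case
      proof (cases "first_contact n w = 1")
        case True
        then show ?thesis using T_J1[OF True] by (auto simp: g1_def)
      next
        case False
        then have "first_contact n w \<in> {2..n+1}" using fc_props(1)[of n w] by auto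
        then show ?thesis using Xm_nonneg[OF elim] nn_good[OF elim] by (auto simp: g1_def)
      qed
    qed
  qed
  then show "1 / (2 * lam) - 1 / (real (n+1) * lam) \<le> integral\<^sup>L P (Sg n g1)"
    using eq E_min E_Xm by (simp add: Bochner_Integration.integral_diff)
qed

lemma I2:
  assumes K: "0 < K" and e: "0 < e"
  shows "integral\<^sup>L P (Sg n (g2 e)) \<le> 2 / lam^2 / K + K * (1 - exp (- e * lam))"
proof -
  let ?R = "\<lambda>w. if first_contact n w \<in> {2..n+1} then g2 e w (w (1,0,0)) else 0"
  have eq: "integral\<^sup>L P (Sg n (g2 e)) = integral\<^sup>L P ?R"
    by (rule swap_sum[OF _ g2_meas]) (auto intro: g_nonneg g_indep)
  have iR: "integrable P ?R"
  proof (rule Bochner_Integration.integrable_bound[OF E_U R_meas[OF g2_meas]])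
    show "AE w in P. norm (?R w) \<le> norm (w (0,1,0))"
      using AE_good[of n] by eventually_elim (auto simp: g2_def nn_good)
  qed
  have iB: "integrable P (\<lambda>w. (w (0,1,0))^2 / K + K * (if w (1,0,0) \<le> e then 1 else 0))"
    using E_U2(1) E_V(1)[of e] e by auto
  have "integral\<^sup>L P ?R \<le> integral\<^sup>L P (\<lambda>w. (w (0,1,0))^2 / K + K * (if w (1,0,0) \<le> e then 1 else 0))"
  proof (rule integral_mono_AE[OF iR iB])
    show "AE w in P. ?R w \<le> (w (0,1,0))^2 / K + K * (if w (1,0,0) \<le> e then 1 else 0)"
      using AE_good[of n]
    proof eventually_elim
      case (elim w)
      have u0: "0 \<le> w (0,1,0)" by (rule nn_good[OF elim])
      have "w (0,1,0) \<le> (w (0,1,0))^2 / K + K" by (rule U_le[OF K u0])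
      moreover have "0 \<le> (w (0,1,0))^2 / K" using K by simp
      ultimately show ?case using u0 K by (auto simp: g2_def)
    qed
  qed
  also have "\<dots> = 2 / lam^2 / K + K * (1 - exp (- e * lam))"
    using E_U2 E_V[of e] e by simp
  finally show ?thesis using eq by simp
qed

lemma I3:
  assumes e: "0 < e"
  shows "integral\<^sup>L P (Sg n (g3 e)) \<le> 1 - exp (- e * lam)"
proof -
  let ?R = "\<lambda>w. if first_contact n w \<in> {2..n+1} then g3 e w (w (1,0,0)) else 0"
  have eq: "integral\<^sup>L P (Sg n (g3 e)) = integral\<^sup>L P ?R"
    by (rule swap_sum[OF _ g3_meas]) (auto intro: g_nonneg g_indep)
  have iR: "integrable P ?R"
  proof (rule Bochner_Integration.integrable_bound[OF P.integrable_const[of 1] R_meas[OF g3_meas]])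
    show "AE w in P. norm (?R w) \<le> norm (1::real)" by (auto simp: g3_def)
  qed
  have "integral\<^sup>L P ?R \<le> integral\<^sup>L P (\<lambda>w. if w (1,0,0) \<le> e then 1 else 0::real)"
    by (rule integral_mono_AE[OF iR E_V(1)]) (use e in \<open>auto simp: g3_def\<close>)
  then show ?thesis using eq E_V(2)[of e] e by simp
qed

end


context fm begin

lemma int_T: "integrable P (T_FM n)"
proof (rule Bochner_Integration.integrable_bound[OF Bochner_Integration.integrable_add[OF E_U P.integrable_const[of "\<bar>c0\<bar>"]] T_meas])
  show "AE w in P. norm (T_FM n w) \<le> norm (w (0,1,0) + \<bar>c0\<bar>)"
    using AE_good[of n]
  proof eventually_elim
    case (elim w)
    show ?case using T_bounds[OF elim] nn_good[OF elim, of "(0,1,0)"] by auto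
  qed
qed

lemma bounds:
  assumes K: "0 < K" and e: "0 < e"
  shows "integral\<^sup>L P (T_FM n) \<le> 1/(2*lam) + 1/(real(n+1)*lam) + 2*(2/lam^2/K) + K*(1 - exp (- e * lam)) + K/e*(1/(real(n+1)*lam))"
    "1/(2*lam) - 1/(real(n+1)*lam) - 2*(2/lam^2/K) - K*(1 - exp (- e * lam)) - K/e*(1/(real(n+1)*lam))
       - \<bar>c0\<bar>*((1 - exp (- e * lam)) + (1/(real(n+1)*lam))/e) \<le> integral\<^sup>L P (T_FM n)"
proof -
  note i = int_Sg E_Xm E_U2 int_T
  have "integral\<^sup>L P (T_FM n) \<le> integral\<^sup>L P (\<lambda>w. Sg n g1 w + Xm n w + Sg n (g2 e) w + (w (0,1,0))^2 / K + K / e * Xm n w)"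
    by (rule integral_mono_AE) (use i AE_good[of n] upper_pw[OF _ K e] in \<open>auto elim: AE_mp\<close>)
  also have "\<dots> = integral\<^sup>L P (Sg n g1) + integral\<^sup>L P (Xm n) + integral\<^sup>L P (Sg n (g2 e)) + integral\<^sup>L P (\<lambda>w. (w (0,1,0))^2) / K + K / e * integral\<^sup>L P (Xm n)"
    using i by simp
  also have "\<dots> \<le> 1/(2*lam) + 1/(real(n+1)*lam) + 2*(2/lam^2/K) + K*(1 - exp (- e * lam)) + K/e*(1/(real(n+1)*lam))"
    unfolding E_Xm(2) E_U2(2) using I1(1)[of n] I2[OF K e, of n] by linarith
  finally show "integral\<^sup>L P (T_FM n) \<le> 1/(2*lam) + 1/(real(n+1)*lam) + 2*(2/lam^2/K) + K*(1 - exp (- e * lam)) + K/e*(1/(real(n+1)*lam))" .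
  have "1/(2*lam) - 1/(real(n+1)*lam) - 2*(2/lam^2/K) - K*(1 - exp (- e * lam)) - K/e*(1/(real(n+1)*lam))
       - \<bar>c0\<bar>*((1 - exp (- e * lam)) + (1/(real(n+1)*lam))/e) \<le>
     integral\<^sup>L P (Sg n g1) - integral\<^sup>L P (Sg n (g2 e)) - integral\<^sup>L P (\<lambda>w. (w (0,1,0))^2) / K - K / e * integral\<^sup>L P (Xm n)
       - \<bar>c0\<bar> * (integral\<^sup>L P (Sg n (g3 e)) + integral\<^sup>L P (Xm n) / e)"
  proof -
    have a: "\<bar>c0\<bar> * integral\<^sup>L P (Sg n (g3 e)) \<le> \<bar>c0\<bar> * (1 - exp (- e * lam))"
      using I3[OF e, of n] by (intro mult_left_mono) auto
    show ?thesis using I1(2)[of n] I2[OF K e, of n] E_Xm E_U2 a by (simp add: algebra_simps)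
  qed
  also have "\<dots> = integral\<^sup>L P (\<lambda>w. Sg n g1 w - Sg n (g2 e) w - (w (0,1,0))^2 / K - K / e * Xm n w - \<bar>c0\<bar> * (Sg n (g3 e) w + Xm n w / e))"
    using i by simp
  also have "\<dots> \<le> integral\<^sup>L P (T_FM n)"
    by (rule integral_mono_AE) (use i AE_good[of n] lower_pw[OF _ K e] in \<open>auto elim: AE_mp\<close>)
  finally show "1/(2*lam) - 1/(real(n+1)*lam) - 2*(2/lam^2/K) - K*(1 - exp (- e * lam)) - K/e*(1/(real(n+1)*lam))
       - \<bar>c0\<bar>*((1 - exp (- e * lam)) + (1/(real(n+1)*lam))/e) \<le> integral\<^sup>L P (T_FM n)" .
qed

end

lemma err_lim:
  fixes lam c :: real assumes "0 < lam"
  shows "((\<lambda>n::nat. 1/(real(n+1)*lam) + 4/lam^2/(real n powr (1/4)) + real n powr (1/4) * (real n powr (-1/2) * lam)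
     + real n powr (1/4) / real n powr (-1/2) * (1/(real(n+1)*lam)) + \<bar>c\<bar> * (real n powr (-1/2) * lam + 1/(real(n+1)*lam) / real n powr (-1/2))) \<longlongrightarrow> 0) at_top"
  using assms by real_asymp

theorem proposition1:
  fixes lam :: real
  assumes "lam > 0"
  shows "(\<lambda>n. integral\<^sup>L (meeting_space lam) (T_FM n)) \<sim>[at_top] (\<lambda>n. 1 / (2 * lam))"
proof -
  interpret fm lam by unfold_locales (rule assms)
  define err where "err n = 1/(real(n+1)*lam) + 4/lam^2/(real n powr (1/4)) + real n powr (1/4) * (real n powr (-1/2) * lam)
     + real n powr (1/4) / real n powr (-1/2) * (1/(real(n+1)*lam)) + \<bar>c0\<bar> * (real n powr (-1/2) * lam + 1/(real(n+1)*lam) / real n powr (-1/2))" for n :: nat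
  have ev: "eventually (\<lambda>n. norm (integral\<^sup>L P (T_FM n) - 1/(2*lam)) \<le> err n) at_top"
    using eventually_ge_at_top[of "1::nat"]
  proof eventually_elim
    case (elim n)
    define K where "K = real n powr (1/4)"
    define e where "e = real n powr (-1/2)"
    have K: "0 < K" and e: "0 < e" using elim by (auto simp: K_def e_def)
    define q where "q = 1 - exp (- e * lam)"
    have q0: "0 \<le> q" using e assms by (simp add: q_def)
    have q1: "q \<le> e * lam" using exp_ge_add_one_self[of "- e * lam"] by (simp add: q_def)
    have Kq: "K * q \<le> K * (e * lam)" using K q1 by (intro mult_left_mono) auto
    have cq: "\<bar>c0\<bar> * q \<le> \<bar>c0\<bar> * (e * lam)" using q1 by (intro mult_left_mono) auto
    have Kq0: "0 \<le> K * q" using K q0 by simp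
    have cq0: "0 \<le> \<bar>c0\<bar> * q" using q0 by simp
    have x0: "0 \<le> \<bar>c0\<bar> * (1/(real(n+1)*lam) / e)" using e assms by simp
    have eq4: "2*(2/lam^2/K) = 4/lam^2/K" by simp
    note B = bounds[OF K e, of n, folded q_def]
    have errE: "err n = 1/(real(n+1)*lam) + 4/lam^2/K + K*(e*lam) + K/e*(1/(real(n+1)*lam)) + (\<bar>c0\<bar>*(e*lam) + \<bar>c0\<bar>*(1/(real(n+1)*lam) / e))"
      by (simp add: err_def K_def e_def distrib_left)
    have "\<bar>c0\<bar>*(q + (1/(real(n+1)*lam))/e) = \<bar>c0\<bar>*q + \<bar>c0\<bar>*(1/(real(n+1)*lam) / e)"
      by (simp add: distrib_left)
    then show ?case using B Kq cq Kq0 cq0 x0 unfolding errE eq4 real_norm_def abs_le_iff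
      by linarith
  qed
  have "(err \<longlongrightarrow> 0) at_top" unfolding err_def[abs_def] by (rule err_lim[OF assms])
  then have "((\<lambda>n. integral\<^sup>L P (T_FM n) - 1/(2*lam)) \<longlongrightarrow> 0) at_top"
    by (rule Lim_null_comparison[OF ev])
  then have "((\<lambda>n. integral\<^sup>L P (T_FM n)) \<longlongrightarrow> 1/(2*lam)) at_top"
    by (rule LIM_zero_cancel)
  then show ?thesis
    by (rule tendsto_imp_asymp_equiv_const) (use assms in simp)
qed

end
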